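(* Let $m\ge3$. For any $k_1,k_2>0$, as $\epsilon\to0$, \[\mu_m^H(\Pi(k_1\epsilon,k_2\epsilon))\to\frac{\frac{k_2}{k_1}\gamma^{\frac{m-2}{2}}}{1+\frac{k_2}{k_1}\gamma^{\frac{m-2}{2}}},\qquad \mu_1^L(\Pi(k_1\epsilon,k_2\epsilon))\to\frac{\frac{k_1}{k_2}\gamma^{\frac{m-2}{2}}}{1+\frac{k_1}{k_2}\gamma^{\frac{m-2}{2}}}.\]
   Context: The state of nature is $\theta\in\{H,L\}$. $S$ is a finite signal set; conditional on $\theta$, signals are i.i.d. with distribution $\pi_\theta$, $\pi_\theta(s)>0$ for all $s,\theta$, $\pi_H\ne\pi_L$. Let $\bar\ell=\max_s\pi_H(s)/\pi_L(s)$, $\underline\ell=\min_s\pi_H(s)/\pi_L(s)$, $\gamma=\bar\ell/\underline\ell>1$; fix a signal $h$ with $\pi_H(h)/\pi_L(h)=\bar\ell$ and a signal $l$ with $\pi_H(l)/\pi_L(l)=\underline\ell$. A protocol on $M=\{1,\dots,m\}$ is $\Pi=(f,g,a)$ with $f:M\times S\to\Delta(M)$, $g\in\Delta(M)$, $a:M\to[0,1]$. For small $\epsilon_1,\epsilon_2>0$ define $\Pi(\epsilon_1,\epsilon_2)$ by: $g(2)=1$; $a(m)=1$ and $a(i)=0$ for $i\ne m$; with $c_h=(\pi_H(h)\pi_L(h))^{(m-2)/2}$ and $c_l=(\pi_H(l)\pi_L(l))^{(m-2)/2}$: states $1$ and $m$ are absorbing ($f(i,s)(i)=1$ for $i\in\{1,m\}$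 and all $s$); on signal $l$: from state $2$ move to $1$ with probability $c_h\epsilon_1$ and stay at $2$ otherwise, and from each state $i\in\{3,\dots,m-1\}$ move to $i-1$; on signal $h$: from state $m-1$ move to $m$ with probability $c_l\epsilon_2$ and stay at $m-1$ otherwise, and from each state $i\in\{2,\dots,m-2\}$ move to $i+1$; on any other signal, every state stays where it is. For this (parsimonious) protocol, $\mu_1^\theta(\Pi),\mu_m^\theta(\Pi)$ denote the probabilities that the Markov chain started at $m_0=2$, with signals drawn i.i.d. from $\pi_\theta$, is absorbed in state $1$ and state $m$ respectively. *)

theory Defs
  imports Complex_Main
begin

text \<open>States are the naturals 1..m; signals form a finite type.  The protocol
  Pi(e1,e2) is given by its transition kernel: proto_f ... i s j is the probability
  of moving from state i to state j on signal s.  The arguments piH piL h l fix the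
  constants c_h and c_l and the distinguished signals h, l.\<close>

definition c_const :: "('s \<Rightarrow> real) \<Rightarrow> ('s \<Rightarrow> real) \<Rightarrow> 's \<Rightarrow> nat \<Rightarrow> real" where
  "c_const piH piL s m = (piH s * piL s) powr ((real m - 2) / 2)"

definition proto_f ::
  "('s \<Rightarrow> real) \<Rightarrow> ('s \<Rightarrow> real) \<Rightarrow> 's \<Rightarrow> 's \<Rightarrow> nat \<Rightarrow> real \<Rightarrow> real \<Rightarrow> nat \<Rightarrow> 's \<Rightarrow> nat \<Rightarrow> real" where
  "proto_f piH piL h l m e1 e2 i s j =
     (if i = 1 \<or> i = m then (if j = i then 1 else 0)
      else if s = l then
        (if i = 2 then
           (if j = 1 then c_const piH piL h m * e1
            else if j = 2 then 1 - c_const piH piL h m * e1 else 0)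
         else (if j = i - 1 then 1 else 0))
      else if s = h then
        (if i = m - 1 then
           (if j = m then c_const piH piL l m * e2
            else if j = m - 1 then 1 - c_const piH piL l m * e2 else 0)
         else (if j = i + 1 then 1 else 0))
      else (if j = i then 1 else 0))"

text \<open>Distribution of the state after n signals, with signals i.i.d. from p
  (the signal distribution in the true state), started at m0 = 2.\<close>

fun state_dist ::
  "('s::finite \<Rightarrow> real) \<Rightarrow> ('s \<Rightarrow> real) \<Rightarrow> 's \<Rightarrow> 's \<Rightarrow> nat \<Rightarrow> real \<Rightarrow> real \<Rightarrow> ('s \<Rightarrow> real)
     \<Rightarrow> nat \<Rightarrow> nat \<Rightarrow> real" where
  "state_dist piH piL h l m e1 e2 p 0 j = (if j = 2 then 1 else 0)"
| "state_dist piH piL h l m e1 e2 p (Suc n) j =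
     (\<Sum>i\<in>{1..m}. state_dist piH piL h l m e1 e2 p n i *
        (\<Sum>s\<in>UNIV. p s * proto_f piH piL h l m e1 e2 i s j))"

definition absorb_prob ::
  "('s::finite \<Rightarrow> real) \<Rightarrow> ('s \<Rightarrow> real) \<Rightarrow> 's \<Rightarrow> 's \<Rightarrow> nat \<Rightarrow> real \<Rightarrow> real \<Rightarrow> ('s \<Rightarrow> real)
     \<Rightarrow> nat \<Rightarrow> real" where
  "absorb_prob piH piL h l m e1 e2 p j = lim (\<lambda>n. state_dist piH piL h l m e1 e2 p n j)"

end

theory Submission
  imports Defs
begin

lemma delta1:
  fixes v :: "nat \<Rightarrow> real"
  assumes "k \<in> S" "finite S"
  shows "(\<Sum>j\<in>S. (if j = k then 1 else 0) * v j) = v k"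
proof -
  have "(\<Sum>j\<in>S. (if j = k then 1 else 0) * v j) = (\<Sum>j\<in>S. (if j = k then v k else 0))"
    by (rule sum.cong) auto
  also have "\<dots> = v k" using assms by simp
  finally show ?thesis .
qed

lemma delta2:
  fixes v :: "nat \<Rightarrow> real"
  assumes "k1 \<in> S" "k2 \<in> S" "k1 \<noteq> k2" "finite S"
  shows "(\<Sum>j\<in>S. (if j = k1 then a else if j = k2 then b else 0) * v j) = a * v k1 + b * v k2"
proof -
  have "(\<Sum>j\<in>S. (if j = k1 then a else if j = k2 then b else 0) * v j)
      = (\<Sum>j\<in>S. (if j = k1 then a * v k1 else 0) + (if j = k2 then b * v k2 else 0))"
    by (rule sum.cong) (use assms in auto)
  also have "\<dots> = a * v k1 + b * v k2" using assms by (simp add: sum.distrib)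
  finally show ?thesis .
qed

lemma split3:
  fixes p G :: "'s::finite \<Rightarrow> real"
  assumes "h \<noteq> l" "sum p UNIV = 1" "\<And>s. G s = (if s = l then Gl else if s = h then Gh else c)"
  shows "(\<Sum>s\<in>UNIV. p s * G s) = c + p l * (Gl - c) + p h * (Gh - c)"
proof -
  have "(\<Sum>s\<in>UNIV. p s * G s) = (\<Sum>s\<in>UNIV. p s * c + ((if s = l then p l * (Gl - c) else 0) + (if s = h then p h * (Gh - c) else 0)))"
    by (rule sum.cong) (use assms in \<open>auto simp: algebra_simps\<close>)
  also have "\<dots> = (\<Sum>s\<in>UNIV. p s) * c + p l * (Gl - c) + p h * (Gh - c)"
    by (simp add: sum.distrib sum_distrib_right)
  finally show ?thesis using assms by simp
qed

lemma bcancel: "(b::real) \<noteq> 0 \<Longrightarrow> b * (a / b * x) = a * x" by simp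

lemma ifnn: "0 \<le> (x::real) \<Longrightarrow> 0 \<le> y \<Longrightarrow> 0 \<le> (if c then x else y)"
  by simp

locale chain =
  fixes piH piL :: "'s::finite \<Rightarrow> real" and h l :: 's and m :: nat and e1 e2 :: real
    and p :: "'s \<Rightarrow> real"
  assumes m3: "m \<ge> 3" and hl: "h \<noteq> l" and ppos: "\<And>s. p s > 0" and psum: "sum p UNIV = 1"
    and Apos: "0 < c_const piH piL h m * e1" and Ale: "c_const piH piL h m * e1 \<le> 1"
    and Bpos: "0 < c_const piH piL l m * e2" and Ble: "c_const piH piL l m * e2 \<le> 1"
begin

abbreviation "A \<equiv> c_const piH piL h m * e1"
abbreviation "B \<equiv> c_const piH piL l m * e2"
abbreviation "pf \<equiv> proto_f piH piL h l m e1 e2"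
abbreviation "D \<equiv> state_dist piH piL h l m e1 e2 p"
definition "K i j = (\<Sum>s\<in>UNIV. p s * pf i s j)"

lemma g_eval:
  fixes v :: "nat \<Rightarrow> real"
  assumes "i \<in> {1..m}"
  shows "(\<Sum>j\<in>{1..m}. pf i s j * v j) = (if i = 1 \<or> i = m then v i else if s = l then
     (if i = 2 then A * v 1 + (1 - A) * v 2 else v (i - 1)) else if s = h then
     (if i = m - 1 then B * v m + (1 - B) * v (m - 1) else v (i + 1)) else v i)"
proof -
  consider "i = 1 \<or> i = m" | "\<not> (i = 1 \<or> i = m)" "s = l" "i = 2"
    | "\<not> (i = 1 \<or> i = m)" "s = l" "i \<noteq> 2"
    | "\<not> (i = 1 \<or> i = m)" "s \<noteq> l" "s = h" "i = m - 1"
    | "\<not> (i = 1 \<or> i = m)" "s \<noteq> l" "s = h" "i \<noteq> m - 1"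
    | "\<not> (i = 1 \<or> i = m)" "s \<noteq> l" "s \<noteq> h" by blast
  then show ?thesis
  proof cases
    case 1
    have "(\<Sum>j\<in>{1..m}. pf i s j * v j) = (\<Sum>j\<in>{1..m}. (if j = i then 1 else 0) * v j)"
      by (rule sum.cong) (use 1 in \<open>auto simp: proto_f_def\<close>)
    also have "\<dots> = v i" using assms by (intro delta1) auto
    finally show ?thesis using 1 by simp
  next
    case 2
    have "(\<Sum>j\<in>{1..m}. pf i s j * v j) = (\<Sum>j\<in>{1..m}. (if j = 1 then A else if j = 2 then 1 - A else 0) * v j)"
      by (rule sum.cong) (use 2 in \<open>auto simp: proto_f_def\<close>)
    also have "\<dots> = A * v 1 + (1 - A) * v 2" using m3 by (intro delta2) auto
    finally show ?thesis using 2 by simp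
  next
    case 3
    have "(\<Sum>j\<in>{1..m}. pf i s j * v j) = (\<Sum>j\<in>{1..m}. (if j = i - 1 then 1 else 0) * v j)"
      by (rule sum.cong) (use 3 in \<open>auto simp: proto_f_def\<close>)
    also have "\<dots> = v (i - 1)" using assms 3 by (intro delta1) auto
    finally show ?thesis using 3 by simp
  next
    case 4
    have "(\<Sum>j\<in>{1..m}. pf i s j * v j) = (\<Sum>j\<in>{1..m}. (if j = m then B else if j = m - 1 then 1 - B else 0) * v j)"
      by (rule sum.cong) (use 4 in \<open>auto simp: proto_f_def\<close>)
    also have "\<dots> = B * v m + (1 - B) * v (m - 1)" using m3 by (intro delta2) auto
    finally show ?thesis using 4 by simp
  next
    case 5
    have "(\<Sum>j\<in>{1..m}. pf i s j * v j) = (\<Sum>j\<in>{1..m}. (if j = i + 1 then 1 else 0) * v j)"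
      by (rule sum.cong) (use 5 in \<open>auto simp: proto_f_def\<close>)
    also have "\<dots> = v (i + 1)" using assms 5 by (intro delta1) auto
    finally show ?thesis using 5 by simp
  next
    case 6
    have "(\<Sum>j\<in>{1..m}. pf i s j * v j) = (\<Sum>j\<in>{1..m}. (if j = i then 1 else 0) * v j)"
      by (rule sum.cong) (use 6 in \<open>auto simp: proto_f_def\<close>)
    also have "\<dots> = v i" using assms by (intro delta1) auto
    finally show ?thesis using 6 by simp
  qed
qed

lemma Kv:
  fixes v :: "nat \<Rightarrow> real"
  assumes "i \<in> {1..m}"
  shows "(\<Sum>j\<in>{1..m}. K i j * v j) = (if i = 1 \<or> i = m then v i else
     v i + p l * ((if i = 2 then A * v 1 + (1 - A) * v 2 else v (i - 1)) - v i)
         + p h * ((if i = m - 1 then B * v m + (1 - B) * v (m - 1) else v (i + 1)) - v i))"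
proof -
  have "(\<Sum>j\<in>{1..m}. K i j * v j) = (\<Sum>j\<in>{1..m}. \<Sum>s\<in>UNIV. p s * (pf i s j * v j))"
    by (simp add: K_def sum_distrib_right mult.assoc)
  also have "\<dots> = (\<Sum>s\<in>UNIV. p s * (\<Sum>j\<in>{1..m}. pf i s j * v j))"
    by (subst sum.swap) (simp add: sum_distrib_left)
  also have "\<dots> = (\<Sum>s\<in>UNIV. p s * (if i = 1 \<or> i = m then v i else if s = l then
     (if i = 2 then A * v 1 + (1 - A) * v 2 else v (i - 1)) else if s = h then
     (if i = m - 1 then B * v m + (1 - B) * v (m - 1) else v (i + 1)) else v i))"
    using g_eval[OF assms] by simp
  also have "\<dots> = (if i = 1 \<or> i = m then v i else
     v i + p l * ((if i = 2 then A * v 1 + (1 - A) * v 2 else v (i - 1)) - v i)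
         + p h * ((if i = m - 1 then B * v m + (1 - B) * v (m - 1) else v (i + 1)) - v i))"
  proof (cases "i = 1 \<or> i = m")
    case True
    then show ?thesis using psum by (simp add: sum_distrib_right[symmetric])
  next
    case False
    show ?thesis
      by (subst split3[OF hl psum]) (use False in auto)
  qed
  finally show ?thesis .
qed

lemma D_Suc: "D (Suc n) j = (\<Sum>i\<in>{1..m}. D n i * K i j)"
  by (simp add: K_def)

lemma lin:
  fixes v :: "nat \<Rightarrow> real"
  shows "(\<Sum>j\<in>{1..m}. D (Suc n) j * v j) = (\<Sum>i\<in>{1..m}. D n i * (\<Sum>j\<in>{1..m}. K i j * v j))"
proof -
  have "(\<Sum>j\<in>{1..m}. D (Suc n) j * v j) = (\<Sum>j\<in>{1..m}. \<Sum>i\<in>{1..m}. D n i * (K i j * v j))"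
    by (simp only: D_Suc sum_distrib_right mult.assoc)
  also have "\<dots> = (\<Sum>i\<in>{1..m}. D n i * (\<Sum>j\<in>{1..m}. K i j * v j))"
    by (subst sum.swap) (simp add: sum_distrib_left)
  finally show ?thesis .
qed

lemma harm_inv:
  fixes v :: "nat \<Rightarrow> real"
  assumes "\<And>i. i \<in> {1..m} \<Longrightarrow> (\<Sum>j\<in>{1..m}. K i j * v j) = v i"
  shows "(\<Sum>j\<in>{1..m}. D n j * v j) = v 2"
proof (induction n)
  case 0
  show ?case using m3 by (simp del: One_nat_def add: delta1)
next
  case (Suc n)
  have "(\<Sum>j\<in>{1..m}. D (Suc n) j * v j) = (\<Sum>i\<in>{1..m}. D n i * v i)"
    unfolding lin
  proof (rule sum.cong)
    fix x assume "x \<in> {1..m}"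
    then show "D n x * (\<Sum>j\<in>{1..m}. K x j * v j) = D n x * v x" using assms[of x] by simp
  qed simp
  then show ?case using Suc by simp
qed

lemma pf_nonneg: "pf i s j \<ge> 0"
proof -
  have "0 \<le> A" "0 \<le> 1 - A" "0 \<le> B" "0 \<le> 1 - B" using Apos Ale Bpos Ble by auto
  then show ?thesis unfolding proto_f_def by (intro ifnn) (simp_all only: order_refl zero_le_one)
qed

lemma K_nonneg: "K i j \<ge> 0"
  unfolding K_def using ppos pf_nonneg by (intro sum_nonneg) (simp add: less_imp_le)

lemma D_nonneg: "D n j \<ge> 0"
proof (induction n arbitrary: j)
  case 0 then show ?case by simp
next
  case (Suc n) then show ?case by (simp only: D_Suc) (intro sum_nonneg mult_nonneg_nonneg K_nonneg, auto)
qed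

lemma K_ge: "K i j \<ge> p s * pf i s j"
proof -
  have "p s * pf i s j \<le> (\<Sum>s\<in>UNIV. p s * pf i s j)"
    by (rule member_le_sum) (auto intro: mult_nonneg_nonneg less_imp_le[OF ppos] pf_nonneg)
  then show ?thesis by (simp add: K_def)
qed

lemma D_ge: "i \<in> {1..m} \<Longrightarrow> D (Suc n) j \<ge> D n i * K i j"
  unfolding D_Suc by (rule member_le_sum) (auto intro: mult_nonneg_nonneg D_nonneg K_nonneg)

lemma mass: "(\<Sum>j\<in>{1..m}. D n j) = 1"
proof -
  have "(\<Sum>j\<in>{1..m}. D n j * (\<lambda>_. 1) j) = (\<lambda>_. 1::real) 2"
  proof (rule harm_inv)
    fix i assume "i \<in> {1..m}"
    then show "(\<Sum>j\<in>{1..m}. K i j * (\<lambda>_. 1) j) = (\<lambda>_. 1::real) i"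
      using Kv[of i "\<lambda>_. 1"] by simp
  qed
  then show ?thesis by simp
qed

lemma D1_le: "D n 1 \<le> 1"
proof -
  have "D n 1 \<le> (\<Sum>j\<in>{1..m}. D n j)"
    by (rule member_le_sum) (use m3 D_nonneg in auto)
  then show ?thesis using mass by simp
qed

lemma K11: "K 1 1 = 1"
  by (simp add: K_def proto_f_def psum)

lemma D1_step: "D (Suc n) 1 \<ge> D n 1 + D n 2 * (p l * A)"
proof -
  have "D n 1 * K 1 1 + D n 2 * K 2 1 = (\<Sum>i\<in>{1,2}. D n i * K i 1)" by simp
  also have "\<dots> \<le> (\<Sum>i\<in>{1..m}. D n i * K i 1)"
    by (rule sum_mono2) (use m3 in \<open>auto intro: mult_nonneg_nonneg D_nonneg K_nonneg\<close>)
  finally have a: "D n 1 * K 1 1 + D n 2 * K 2 1 \<le> D (Suc n) 1" by (simp only: D_Suc)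
  have "K 2 1 \<ge> p l * pf 2 l 1" by (rule K_ge)
  moreover have "pf 2 l 1 = A" using m3 by (simp add: proto_f_def)
  ultimately have "K 2 1 \<ge> p l * A" by simp
  then have "D n 2 * K 2 1 \<ge> D n 2 * (p l * A)" by (intro mult_left_mono D_nonneg)
  then show ?thesis using a K11 by simp
qed

lemma D2_sum: "(\<Sum>k<n. D k 2) \<le> 1 / (p l * A)"
proof -
  have "(\<Sum>k<n. D k 2 * (p l * A)) \<le> D n 1 - D 0 1"
  proof (induction n)
    case 0 then show ?case by simp
  next
    case (Suc n) then show ?case using D1_step[of n] by simp
  qed
  also have "\<dots> \<le> 1" using D1_le[of n] by simp
  finally have "(\<Sum>k<n. D k 2) * (p l * A) \<le> 1" by (simp add: sum_distrib_right)
  moreover have "p l * A > 0" using ppos Apos by simp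
  ultimately show ?thesis by (simp add: field_simps)
qed

lemma D2_lim: "(\<lambda>n. D n 2) \<longlonglongrightarrow> 0"
proof -
  have "summable (\<lambda>n. D n 2)"
    by (rule summableI_nonneg_bounded[OF D_nonneg D2_sum])
  then show ?thesis by (rule summable_LIMSEQ_zero)
qed

lemma int_lim: "k + 2 \<le> m - 1 \<Longrightarrow> (\<lambda>n. D n (k + 2)) \<longlonglongrightarrow> 0"
proof (induction k)
  case 0 show ?case using D2_lim by (simp add: numeral_2_eq_2)
next
  case (Suc k)
  have IH: "(\<lambda>n. D n (k + 2)) \<longlonglongrightarrow> 0" using Suc by simp
  have le: "D n (Suc k + 2) \<le> D (Suc n) (k + 2) / p l" for n
  proof -
    have a1: "(k + 3 = 1 \<or> k + 3 = m) = False" using Suc.prems by auto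
    have a2: "(k + 3 = 2) = False" by simp
    have a3: "(k + 2 = k + 3 - 1) = True" by simp
    have "pf (k + 3) l (k + 2) = 1" unfolding proto_f_def by (simp only: a1 a2 a3 if_False if_True simp_thms)
    then have "K (k + 3) (k + 2) \<ge> p l" using K_ge[where i="k+3" and j="k+2" and s=l] by simp
    then have "D n (k + 3) * p l \<le> D n (k + 3) * K (k + 3) (k + 2)"
      by (intro mult_left_mono D_nonneg)
    also have "\<dots> \<le> D (Suc n) (k + 2)" by (rule D_ge) (use Suc.prems in auto)
    finally have x: "D n (k + 3) * p l \<le> D (Suc n) (k + 2)" .
    have e: "Suc k + 2 = k + 3" by simp
    show ?thesis unfolding e pos_le_divide_eq[OF ppos[of l]] by (rule x)
  qed
  have lim: "(\<lambda>n. D (Suc n) (k + 2) / p l) \<longlonglongrightarrow> 0 / p l"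
  proof (rule tendsto_divide)
    show "(\<lambda>n. D (Suc n) (k + 2)) \<longlonglongrightarrow> 0" using LIMSEQ_Suc[OF IH] .
  qed (use ppos[of l] in auto)
  show ?case
  proof (rule tendsto_sandwich[of "\<lambda>_. 0" _ _ "\<lambda>n. D (Suc n) (k + 2) / p l"])
    show "\<forall>\<^sub>F n in sequentially. 0 \<le> D n (Suc k + 2)" by (rule always_eventually) (simp add: D_nonneg)
    show "\<forall>\<^sub>F n in sequentially. D n (Suc k + 2) \<le> D (Suc n) (k + 2) / p l" by (rule always_eventually) (rule allI, rule le)
  qed (rule tendsto_const, use lim in simp)
qed

lemma ends_lim:
  fixes v :: "nat \<Rightarrow> real"
  assumes "\<And>i. i \<in> {1..m} \<Longrightarrow> (\<Sum>j\<in>{1..m}. K i j * v j) = v i"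
  shows "(\<lambda>n. D n 1 * v 1 + D n m * v m) \<longlonglongrightarrow> v 2"
proof -
  have split: "{1..m} = insert 1 (insert m {2..m-1})" using m3 by auto
  have eq: "D n 1 * v 1 + D n m * v m = v 2 - (\<Sum>j\<in>{2..m-1}. D n j * v j)" for n
  proof -
    have n1: "1 \<notin> insert m {2..m-1}" and nm: "m \<notin> {2..m-1}" using m3 by auto
    have "(\<Sum>j\<in>{1..m}. D n j * v j) = D n 1 * v 1 + (D n m * v m + (\<Sum>j\<in>{2..m-1}. D n j * v j))"
      unfolding split by (simp only: sum.insert[OF finite_insert[THEN iffD2, OF finite_atLeastAtMost] n1] sum.insert[OF finite_atLeastAtMost nm])
    then show ?thesis using harm_inv[OF assms, of n] by linarith
  qed
  have "(\<lambda>n. \<Sum>j\<in>{2..m-1}. D n j * v j) \<longlonglongrightarrow> 0"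
  proof (rule tendsto_null_sum)
    fix j assume j: "j \<in> {2..m-1}"
    define k where "k = j - 2"
    have j2: "2 \<le> j" using j by simp
    have e: "j = k + 2" unfolding k_def by (rule le_add_diff_inverse2[OF j2, symmetric])
    have "(\<lambda>n. D n j) \<longlonglongrightarrow> 0" unfolding e by (rule int_lim) (use j e in auto)
    then show "(\<lambda>n. D n j * v j) \<longlonglongrightarrow> 0" by (rule tendsto_mult_left_zero)
  qed
  then have "(\<lambda>n. v 2 - (\<Sum>j\<in>{2..m-1}. D n j * v j)) \<longlonglongrightarrow> v 2 - 0"
    by (intro tendsto_diff tendsto_const)
  then show ?thesis unfolding eq by simp
qed

definition "rho = p l / p h"
definition "w j = (if j \<le> 1 then 0 else if j < m then 1 + A * (\<Sum>k\<in>{1..j-2}. rho^k)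
   else 1 + A * (\<Sum>k\<in>{1..m-3}. rho^k) + A / B * rho^(m-2))"

lemma w1: "w 1 = 0" by (simp add: w_def)
lemma w2: "w 2 = 1" using m3 by (simp add: w_def)

lemma w_step: "t + 3 \<le> m - 1 \<Longrightarrow> w (t + 3) = w (t + 2) + A * rho ^ (t + 1)"
proof -
  assume a: "t + 3 \<le> m - 1"
  have e1: "t + 3 - 2 = Suc t" "t + 2 - 2 = t" by simp_all
  have c1: "\<not> t + 3 \<le> 1" "t + 3 < m" "\<not> t + 2 \<le> 1" "t + 2 < m" using a by simp_all
  have "w (t + 3) = 1 + A * (\<Sum>k\<in>{1..Suc t}. rho^k)" unfolding w_def using c1 e1 by simp
  also have "\<dots> = 1 + A * (\<Sum>k\<in>{1..t}. rho^k) + A * rho ^ (t + 1)" by (simp add: algebra_simps)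
  also have "1 + A * (\<Sum>k\<in>{1..t}. rho^k) = w (t + 2)" unfolding w_def using c1 e1 by simp
  finally show ?thesis .
qed

lemma w_last: "w m = w (m - 1) + A / B * rho ^ (m - 2)"
proof -
  have c1: "\<not> m - 1 \<le> 1" "m - 1 < m" "m - 1 - 2 = m - 3" using m3 by simp_all
  have "w (m - 1) = 1 + A * (\<Sum>k\<in>{1..m-3}. rho^k)" unfolding w_def using c1 by simp
  moreover have "w m = 1 + A * (\<Sum>k\<in>{1..m-3}. rho^k) + A / B * rho^(m-2)" unfolding w_def using m3 by simp
  ultimately show ?thesis by simp
qed

lemma rho_eq: "p h * rho = p l"
  using ppos[of h] by (simp add: rho_def)

lemma w_harm: "i \<in> {1..m} \<Longrightarrow> (\<Sum>j\<in>{1..m}. K i j * w j) = w i"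
proof -
  assume i: "i \<in> {1..m}"
  show ?thesis
  proof (cases "i = 1 \<or> i = m")
    case True then show ?thesis using Kv[OF i, of w] by simp
  next
    case False
    have i2: "2 \<le> i" using i False by auto
    have im: "i \<le> m - 1" using i False by auto
    define t where "t = i - 2"
    have t: "i = t + 2" "t + 2 \<le> m - 1" unfolding t_def using le_add_diff_inverse2[OF i2] im by simp_all
    have gl: "(if i = 2 then A * w 1 + (1 - A) * w 2 else w (i - 1)) - w i = - A * rho ^ t"
    proof (cases t)
      case 0
      have i2: "i = 2" using t 0 by simp
      show ?thesis unfolding i2 by (simp only: if_True refl w1 w2) (simp add: 0)
    next
      case (Suc t')
      have "w (t' + 3) = w (t' + 2) + A * rho ^ (t' + 1)" by (rule w_step) (use t Suc in simp)
      moreover have "i = t' + 3" "i - 1 = t' + 2" "i \<noteq> 2" using t Suc by simp_all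
      ultimately show ?thesis using Suc by simp
    qed
    have gh: "(if i = m - 1 then B * w m + (1 - B) * w (m - 1) else w (i + 1)) - w i = A * rho ^ (t + 1)"
    proof (cases "i = m - 1")
      case True
      have "B * w m + (1 - B) * w (m - 1) - w i = B * (A / B * rho ^ (m - 2))"
        using True w_last by (simp add: algebra_simps)
      also have "\<dots> = A * rho ^ (m - 2)" using Bpos by (intro bcancel) (rule less_imp_neq[symmetric])
      finally have x: "B * w m + (1 - B) * w (m - 1) - w i = A * rho ^ (m - 2)" .
      have e: "m - 2 = t + 1" using True t m3 by linarith
      show ?thesis using x True unfolding e by simp
    next
      case False
      have ws: "w (t + 3) = w (t + 2) + A * rho ^ (t + 1)" by (rule w_step) (use t False in simp)
      have e: "i + 1 = t + 3" using t by simp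
      show ?thesis unfolding if_not_P[OF False] e by (simp only: ws t(1))
    qed
    have x: "(\<Sum>j\<in>{1..m}. K i j * w j) = w i + (p l * (- A * rho ^ t) + p h * (A * rho ^ (t + 1)))"
      using Kv[OF i, of w] False gl gh by simp
    have y: "p l * (- A * rho ^ t) + p h * (A * rho ^ (t + 1)) = A * rho ^ t * (p h * rho - p l)"
      by (simp add: algebra_simps)
    show ?thesis using x y by (simp add: rho_eq)
  qed
qed

lemma one_harm: "i \<in> {1..m} \<Longrightarrow> (\<Sum>j\<in>{1..m}. K i j * (\<lambda>_. 1) j) = (\<lambda>_. 1::real) i"
  using Kv[of i "\<lambda>_. 1"] by simp

lemma rho_pos: "rho > 0" using ppos[of l] ppos[of h] by (simp add: rho_def)

lemma Z_pos: "w m > 0"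
proof -
  have "w m = 1 + A * (\<Sum>k\<in>{1..m-3}. rho^k) + A / B * rho^(m-2)" unfolding w_def using m3 by simp
  moreover have "0 \<le> (\<Sum>k\<in>{1..m-3}. rho^k)" using rho_pos by (intro sum_nonneg) simp
  moreover have "0 \<le> A / B * rho^(m-2)" using Apos Bpos rho_pos by simp
  moreover have "0 \<le> A * (\<Sum>k\<in>{1..m-3}. rho^k)" using Apos calculation(2) by simp
  ultimately show ?thesis by linarith
qed

lemma Dm_lim: "(\<lambda>n. D n m) \<longlonglongrightarrow> 1 / w m"
proof -
  have "(\<lambda>n. D n 1 * w 1 + D n m * w m) \<longlonglongrightarrow> w 2" by (rule ends_lim) (rule w_harm)
  then have "(\<lambda>n. D n m * w m) \<longlonglongrightarrow> 1" by (simp only: w1 w2 mult_zero_right add_0_left)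
  then have "(\<lambda>n. D n m * w m / w m) \<longlonglongrightarrow> 1 / w m" by (rule tendsto_divide) (use Z_pos in auto)
  then show ?thesis using Z_pos by simp
qed

lemma D1_lim: "(\<lambda>n. D n 1) \<longlonglongrightarrow> 1 - 1 / w m"
proof -
  have "(\<lambda>n. D n 1 * (\<lambda>_. 1::real) 1 + D n m * (\<lambda>_. 1::real) m) \<longlonglongrightarrow> (\<lambda>_. 1::real) 2"
    by (rule ends_lim) (rule one_harm)
  then have a: "(\<lambda>n. D n 1 + D n m) \<longlonglongrightarrow> 1" by simp
  have "(\<lambda>n. (D n 1 + D n m) - D n m) \<longlonglongrightarrow> 1 - 1 / w m" by (rule tendsto_diff[OF a Dm_lim])
  then show ?thesis by simp
qed

lemma Zeq: "w m = 1 + A * (\<Sum>k\<in>{1..m-3}. (p l / p h)^k) + A / B * (p l / p h)^(m-2)"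
  unfolding w_def rho_def using m3 by simp

lemma abs_m: "absorb_prob piH piL h l m e1 e2 p m = 1 / (1 + A * (\<Sum>k\<in>{1..m-3}. (p l / p h)^k) + A / B * (p l / p h)^(m-2))"
  unfolding absorb_prob_def Zeq[symmetric] by (rule limI[OF Dm_lim])

lemma abs_1: "absorb_prob piH piL h l m e1 e2 p 1 = 1 - 1 / (1 + A * (\<Sum>k\<in>{1..m-3}. (p l / p h)^k) + A / B * (p l / p h)^(m-2))"
  unfolding absorb_prob_def Zeq[symmetric] by (rule limI[OF D1_lim])

end


lemma inv_lem: "(x::real) > 0 \<Longrightarrow> 1 / (1 + 1 / x) = x / (1 + x)"
  by (simp add: field_simps)

lemma inv_lem2: "(x::real) \<noteq> 0 \<Longrightarrow> q * x = 1 \<Longrightarrow> q = 1 / x"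
  by (simp add: field_simps)

lemma inv_lem3: "(x::real) > 0 \<Longrightarrow> 1 - 1 / (1 + x) = x / (1 + x)"
  by (simp add: field_simps)

lemma pow_powr:
  fixes rho :: real
  assumes "rho > 0" "m \<ge> 3"
  shows "rho ^ (m - 2) = (rho ^ 2) powr ((real m - 2) / 2)"
proof -
  have e: "real (m - 2) = 2 * ((real m - 2) / 2)" using assms(2) by (simp add: of_nat_diff)
  have "(rho ^ 2) powr ((real m - 2) / 2) = (rho powr (real 2)) powr ((real m - 2) / 2)"
    using assms(1) by (simp only: powr_realpow)
  also have "\<dots> = rho powr (real (m - 2))" unfolding powr_powr e by simp
  also have "\<dots> = rho ^ (m - 2)" using assms(1) by (rule powr_realpow)
  finally show ?thesis by simp
qed

lemma key_H:
  fixes a b c d t :: real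
  assumes "a > 0" "b > 0" "c > 0" "d > 0"
  shows "(a * b) powr t / (c * d) powr t * ((c / a) ^ 2) powr t * ((a / b) / (c / d)) powr t = 1"
proof -
  have eq: "(a * b) powr t / (c * d) powr t * ((c / a) ^ 2) powr t * ((a / b) / (c / d)) powr t
      = ((a * b) / (c * d) * (c / a) ^ 2 * ((a / b) / (c / d))) powr t"
    using assms by (simp add: powr_mult powr_divide)
  have inner: "(a * b) / (c * d) * (c / a) ^ 2 * ((a / b) / (c / d)) = 1"
    using assms by (simp add: field_simps power2_eq_square)
  have "(a * b) powr t / (c * d) powr t * ((c / a) ^ 2) powr t * ((a / b) / (c / d)) powr t = 1 powr t"
    using eq unfolding inner .
  then show ?thesis by (simp only: powr_one_eq_one)
qed

lemma key_L:
  fixes a b c d t :: real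
  assumes "a > 0" "b > 0" "c > 0" "d > 0"
  shows "(a * b) powr t / (c * d) powr t * ((d / b) ^ 2) powr t = ((a / b) / (c / d)) powr t"
proof -
  have "(a * b) powr t / (c * d) powr t * ((d / b) ^ 2) powr t
      = ((a * b) / (c * d) * (d / b) ^ 2) powr t"
    using assms by (simp add: powr_mult powr_divide)
  also have "(a * b) / (c * d) * (d / b) ^ 2 = (a / b) / (c / d)"
    using assms by (simp add: field_simps power2_eq_square)
  finally show ?thesis .
qed

theorem mainTheorem13:
  fixes piH piL :: "'s::finite \<Rightarrow> real" and h l :: 's and m :: nat and k1 k2 :: real
  assumes "m \<ge> 3"
    and "\<forall>s. piH s > 0" and "\<forall>s. piL s > 0"
    and "(\<Sum>s\<in>UNIV. piH s) = 1" and "(\<Sum>s\<in>UNIV. piL s) = 1"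
    and "piH \<noteq> piL"
    and "piH h / piL h = Max (range (\<lambda>s. piH s / piL s))"
    and "piH l / piL l = Min (range (\<lambda>s. piH s / piL s))"
    and "k1 > 0" and "k2 > 0"
  shows "let \<gamma> = Max (range (\<lambda>s. piH s / piL s)) / Min (range (\<lambda>s. piH s / piL s)) in
    ((\<lambda>\<epsilon>. absorb_prob piH piL h l m (k1 * \<epsilon>) (k2 * \<epsilon>) piH m)
       \<longlongrightarrow> (k2 / k1 * \<gamma> powr ((real m - 2) / 2)) / (1 + k2 / k1 * \<gamma> powr ((real m - 2) / 2)))
      (at_right 0)
    \<and> ((\<lambda>\<epsilon>. absorb_prob piH piL h l m (k1 * \<epsilon>) (k2 * \<epsilon>) piL 1)
       \<longlongrightarrow> (k1 / k2 * \<gamma> powr ((real m - 2) / 2)) / (1 + k1 / k2 * \<gamma> powr ((real m - 2) / 2)))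
      (at_right 0)"
proof -
  define r where "r s = piH s / piL s" for s
  have pH: "\<And>s. piH s > 0" and pL: "\<And>s. piL s > 0" using assms(2,3) by auto
  have Mx: "\<And>s. r s \<le> r h" unfolding r_def assms(7) by (rule Max_ge) auto
  have Mn: "\<And>s. r l \<le> r s" unfolding r_def assms(8) by (rule Min_le) auto
  have hl: "h \<noteq> l"
  proof
    assume "h = l"
    then have req: "\<And>s. r s = r h" using Mx Mn by (meson order_antisym)
    have "\<And>s. piH s = r h * piL s" using req pL unfolding r_def by (metis divide_eq_eq less_irrefl)
    then have "(\<Sum>s\<in>UNIV. piH s) = r h * (\<Sum>s\<in>UNIV. piL s)" by (simp add: sum_distrib_left)
    then have "r h = 1" using assms(4,5) by simp
    then have "piH = piL" using \<open>\<And>s. piH s = r h * piL s\<close> by auto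
    then show False using assms(6) by simp
  qed
  define t where "t = (real m - 2) / 2"
  define ch where "ch = c_const piH piL h m"
  define cl where "cl = c_const piH piL l m"
  have chp: "ch > 0" unfolding ch_def c_const_def using mult_pos_pos[OF pH[of h] pL[of h]] pH[of h] pL[of h] by simp
  have clp: "cl > 0" unfolding cl_def c_const_def using mult_pos_pos[OF pH[of l] pL[of l]] pH[of l] pL[of l] by simp
  define \<gamma> where "\<gamma> = r h / r l"
  have gam: "Max (range (\<lambda>s. piH s / piL s)) / Min (range (\<lambda>s. piH s / piL s)) = \<gamma>"
    unfolding \<gamma>_def r_def assms(7,8) ..
  have gpos: "\<gamma> > 0" unfolding \<gamma>_def r_def using pH pL by simp
  define SH where "SH = (\<Sum>k\<in>{1..m-3}. (piH l / piH h)^k)"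
  define SL where "SL = (\<Sum>k\<in>{1..m-3}. (piL l / piL h)^k)"
  define QH where "QH = ch * k1 / (cl * k2) * (piH l / piH h)^(m-2)"
  define QL where "QL = ch * k1 / (cl * k2) * (piL l / piL h)^(m-2)"
  define FH where "FH e = 1 / (1 + ch * (k1 * e) * SH + QH)" for e :: real
  define FL where "FL e = 1 - 1 / (1 + ch * (k1 * e) * SL + QL)" for e :: real
  define b where "b = min (1 / (ch * k1)) (1 / (cl * k2))"
  have bpos: "b > 0" unfolding b_def using chp clp assms(9,10) by simp
  have ev: "\<forall>\<^sub>F e in at_right 0. absorb_prob piH piL h l m (k1 * e) (k2 * e) piH m = FH e
             \<and> absorb_prob piH piL h l m (k1 * e) (k2 * e) piL 1 = FL e"
    unfolding eventually_at_right_field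
  proof (intro exI[of _ b] conjI allI impI bpos)
    fix e :: real assume e0: "0 < e" and eb: "e < b"
    have A1: "ch * (k1 * e) \<le> 1"
    proof -
      have "e < 1 / (ch * k1)" using eb unfolding b_def by simp
      then have "e * (ch * k1) < 1" using chp assms(9) by (simp add: field_simps)
      then show ?thesis by (simp add: algebra_simps)
    qed
    have B1: "cl * (k2 * e) \<le> 1"
    proof -
      have "e < 1 / (cl * k2)" using eb unfolding b_def by simp
      then have "e * (cl * k2) < 1" using clp assms(10) by (simp add: field_simps)
      then show ?thesis by (simp add: algebra_simps)
    qed
    have A0: "0 < ch * (k1 * e)" using chp assms(9) e0 by simp
    have B0: "0 < cl * (k2 * e)" using clp assms(10) e0 by simp
    have ratio: "ch * (k1 * e) / (cl * (k2 * e)) = ch * k1 / (cl * k2)" using e0 by simp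
    have cH: "chain piH piL h l m (k1 * e) (k2 * e) piH"
      by unfold_locales (use assms(1,4) hl pH A0 A1 B0 B1 in \<open>simp_all add: ch_def cl_def\<close>)
    have cL: "chain piH piL h l m (k1 * e) (k2 * e) piL"
      by unfold_locales (use assms(1,5) hl pL A0 A1 B0 B1 in \<open>simp_all add: ch_def cl_def\<close>)
    show "absorb_prob piH piL h l m (k1 * e) (k2 * e) piH m = FH e"
      unfolding chain.abs_m[OF cH] FH_def SH_def QH_def ch_def[symmetric] cl_def[symmetric] ratio ..
    show "absorb_prob piH piL h l m (k1 * e) (k2 * e) piL 1 = FL e"
      unfolding chain.abs_1[OF cL] FL_def SL_def QL_def ch_def[symmetric] cl_def[symmetric] ratio ..
  qed
  have QHpos: "QH \<ge> 0" unfolding QH_def using chp clp assms(9,10) pH[of l] pH[of h]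
    by (intro mult_nonneg_nonneg divide_nonneg_nonneg zero_le_power) auto
  have QLpos: "QL \<ge> 0" unfolding QL_def using chp clp assms(9,10) pL[of l] pL[of h]
    by (intro mult_nonneg_nonneg divide_nonneg_nonneg zero_le_power) auto
  have limH: "(FH \<longlongrightarrow> FH 0) (at_right 0)"
    unfolding FH_def by (intro tendsto_intros) (use QHpos in auto)
  have limL: "(FL \<longlongrightarrow> FL 0) (at_right 0)"
    unfolding FL_def by (intro tendsto_intros) (use QLpos in auto)
  have XH: "QH * (k2 / k1 * \<gamma> powr t) = 1"
  proof -
    have "ch / cl * (piH l / piH h)^(m-2) * \<gamma> powr t = 1"
      unfolding ch_def cl_def c_const_def pow_powr[OF divide_pos_pos[OF pH pH] assms(1)] t_def[symmetric]
        \<gamma>_def r_def by (rule key_H) (use pH pL in auto)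
    then show ?thesis unfolding QH_def using assms(9,10) chp clp gpos pH[of l] pH[of h] by (simp add: field_simps)
  qed
  have XL: "QL = k1 / k2 * \<gamma> powr t"
  proof -
    have "ch / cl * (piL l / piL h)^(m-2) = \<gamma> powr t"
      unfolding ch_def cl_def c_const_def pow_powr[OF divide_pos_pos[OF pL pL] assms(1)] t_def[symmetric]
        \<gamma>_def r_def by (rule key_L) (use pH pL in auto)
    then show ?thesis unfolding QL_def using assms(9,10) chp clp gpos pL[of l] pL[of h] by (simp add: field_simps)
  qed
  have gt: "\<gamma> powr t > 0" using gpos by simp
  have FH0: "FH 0 = (k2 / k1 * \<gamma> powr t) / (1 + k2 / k1 * \<gamma> powr t)"
  proof -
    have Xp: "k2 / k1 * \<gamma> powr t > 0" using gt assms(9,10) by simp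
    have q: "QH = 1 / (k2 / k1 * \<gamma> powr t)" by (rule inv_lem2[OF _ XH]) (rule less_imp_neq[OF Xp, symmetric])
    have "FH 0 = 1 / (1 + 1 / (k2 / k1 * \<gamma> powr t))" unfolding FH_def q by simp
    then show ?thesis using inv_lem[OF Xp] by simp
  qed
  have FL0: "FL 0 = (k1 / k2 * \<gamma> powr t) / (1 + k1 / k2 * \<gamma> powr t)"
  proof -
    have Yp: "k1 / k2 * \<gamma> powr t > 0" using gt assms(9,10) by simp
    have "FL 0 = 1 - 1 / (1 + k1 / k2 * \<gamma> powr t)" unfolding FL_def XL by simp
    then show ?thesis using inv_lem3[OF Yp] by simp
  qed
  have "((\<lambda>e. absorb_prob piH piL h l m (k1 * e) (k2 * e) piH m) \<longlongrightarrow> FH 0) (at_right 0)"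
    by (rule Lim_transform_eventually[OF limH]) (use ev in \<open>auto elim: eventually_mono\<close>)
  moreover have "((\<lambda>e. absorb_prob piH piL h l m (k1 * e) (k2 * e) piL 1) \<longlongrightarrow> FL 0) (at_right 0)"
    by (rule Lim_transform_eventually[OF limL]) (use ev in \<open>auto elim: eventually_mono\<close>)
  ultimately show ?thesis unfolding Let_def gam FH0 FL0 t_def by simp
qed

end
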